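(* Let $G$ be a (possibly infinite) cyclic graph with $\mathrm{wf}(G)=\frac pq$, where $p,q$ are relatively prime integers. If $v\in V$ is periodic, then its orbit has length $q$ and winding number $\gamma_q(v)=p$.
   Context: $S^1=\mathbb{R}/\mathbb{Z}$; $\preceq$/$\prec$ clockwise order; $\vec d(p,q)\in[0,1)$ clockwise distance. A directed graph has no loops and no pair of opposite edges; $N^+[G,v]=\{v\}\cup\{w:v\to w\}$. A directed graph with vertex set $V\subseteq S^1$ is cyclic if whenever $v\to u$ is an edge, $v\to w$ and $w\to u$ are edges for all $w\in V$ with $v\prec w\prec u\prec v$. For $0\le k<n/2$, $C_n^k$ is the cyclic graph on $\{0,\dots,n-1\}$ with edges $i\to i+s\bmod n$, $1\le s\le k$; a cyclic homomorphism is a directed-graph homomorphism weakly preserving cyclic order and non-constant when the domain has a directed cycle. For finite cyclic $G$, $\mathrm{wf}(G)=\sup\{k/n:\exists$ cyclic homomorphism $C_n^k\to G\}$; in general $\mathrm{wf}(G)=\sup\{\mathrm{wf}(G[W]):W\subseteq V$ finite$\}$. For $m\ge1$, $\gamma_m(v_0)=\sup\{\sum_{i=0}^{m-1}\vec d(v_i,v_{i+1}): v_{i+1}\in N^+[G,v_i]\}$. A vertex $v$ is periodic if there is $i\ge1$ such that $\gamma_i(v)$ is an integer and the supremum defining $\gamma_i(v)$ is achieved; the length of its orbit is the least such $i$, and its winding number is $\gamma_\ell(v)$ for that least $\ell$. *)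

theory Defs
  imports Complex_Main
begin

text \<open>Points of the circle S^1 = R/Z are represented by reals in [0,1).
  A directed graph is a pair (V, E) with V a set of such points and E a set of
  ordered pairs (edges v -> w).\<close>

definition cdist :: "real \<Rightarrow> real \<Rightarrow> real" where
  "cdist a b = frac (b - a)"

text \<open>Weak clockwise order a \<preceq> b \<preceq> c \<preceq> a.\<close>
definition cyc_weak :: "real \<Rightarrow> real \<Rightarrow> real \<Rightarrow> bool" where
  "cyc_weak a b c \<longleftrightarrow> cdist a b + cdist b c + cdist c a \<le> 1"

definition cyc_strict :: "real \<Rightarrow> real \<Rightarrow> real \<Rightarrow> bool" where
  "cyc_strict a b c \<longleftrightarrow> a \<noteq> b \<and> b \<noteq> c \<and> c \<noteq> a \<and> cyc_weak a b c"

definition circ_digraph :: "real set \<Rightarrow> (real \<times> real) set \<Rightarrow> bool" where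
  "circ_digraph V E \<longleftrightarrow> V \<subseteq> {0..<1} \<and> E \<subseteq> V \<times> V \<and>
     (\<forall>v. (v, v) \<notin> E) \<and> (\<forall>v w. (v, w) \<in> E \<longrightarrow> (w, v) \<notin> E)"

definition cyclic_graph :: "real set \<Rightarrow> (real \<times> real) set \<Rightarrow> bool" where
  "cyclic_graph V E \<longleftrightarrow> circ_digraph V E \<and>
     (\<forall>v u w. (v, u) \<in> E \<longrightarrow> w \<in> V \<longrightarrow> cyc_strict v w u \<longrightarrow> (v, w) \<in> E \<and> (w, u) \<in> E)"

text \<open>Cyclic homomorphism C_n^k -> (W, F); vertex i of C_n^k is the point i/n of the circle.\<close>
definition cyc_hom :: "nat \<Rightarrow> nat \<Rightarrow> real set \<Rightarrow> (real \<times> real) set \<Rightarrow> (nat \<Rightarrow> real) \<Rightarrow> bool" where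
  "cyc_hom n k W F f \<longleftrightarrow>
     (\<forall>i<n. f i \<in> W) \<and>
     (\<forall>i<n. \<forall>s. 1 \<le> s \<and> s \<le> k \<longrightarrow> (f i, f ((i + s) mod n)) \<in> F) \<and>
     (\<forall>i<n. \<forall>j<n. \<forall>l<n. cyc_weak (real i / real n) (real j / real n) (real l / real n)
          \<longrightarrow> cyc_weak (f i) (f j) (f l)) \<and>
     (1 \<le> k \<longrightarrow> (\<exists>i<n. \<exists>j<n. f i \<noteq> f j))"

definition wf_fin :: "real set \<Rightarrow> (real \<times> real) set \<Rightarrow> real" where
  "wf_fin W F = Sup {real k / real n | n k. 2 * k < n \<and> (\<exists>f. cyc_hom n k W F f)}"

definition winding_fraction :: "real set \<Rightarrow> (real \<times> real) set \<Rightarrow> real" where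
  "winding_fraction V E = Sup {wf_fin W (E \<inter> (W \<times> W)) | W. finite W \<and> W \<subseteq> V \<and> W \<noteq> {}}"

definition out_nbhd :: "(real \<times> real) set \<Rightarrow> real \<Rightarrow> real set" where
  "out_nbhd E v = {v} \<union> {w. (v, w) \<in> E}"

definition is_walk :: "(real \<times> real) set \<Rightarrow> nat \<Rightarrow> (nat \<Rightarrow> real) \<Rightarrow> bool" where
  "is_walk E m x \<longleftrightarrow> (\<forall>i<m. x (Suc i) \<in> out_nbhd E (x i))"

definition walk_len :: "nat \<Rightarrow> (nat \<Rightarrow> real) \<Rightarrow> real" where
  "walk_len m x = (\<Sum>i<m. cdist (x i) (x (Suc i)))"

definition gamma :: "(real \<times> real) set \<Rightarrow> nat \<Rightarrow> real \<Rightarrow> real" where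
  "gamma E m v = Sup {walk_len m x | x. x 0 = v \<and> is_walk E m x}"

definition gamma_attained :: "(real \<times> real) set \<Rightarrow> nat \<Rightarrow> real \<Rightarrow> bool" where
  "gamma_attained E m v \<longleftrightarrow> (\<exists>x. x 0 = v \<and> is_walk E m x \<and> walk_len m x = gamma E m v)"

definition periodic_at :: "(real \<times> real) set \<Rightarrow> real \<Rightarrow> nat \<Rightarrow> bool" where
  "periodic_at E v i \<longleftrightarrow> 1 \<le> i \<and> gamma E i v \<in> \<int> \<and> gamma_attained E i v"

definition periodic :: "(real \<times> real) set \<Rightarrow> real \<Rightarrow> bool" where
  "periodic E v \<longleftrightarrow> (\<exists>i. periodic_at E v i)"

definition orbit_length :: "(real \<times> real) set \<Rightarrow> real \<Rightarrow> nat" where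
  "orbit_length E v = (LEAST i. periodic_at E v i)"

definition winding_number :: "(real \<times> real) set \<Rightarrow> real \<Rightarrow> real" where
  "winding_number E v = gamma E (orbit_length E v) v"

end

theory Submission
  imports Defs
begin


lemma frac_small: "-1 < (x::real) \<Longrightarrow> x < 1 \<Longrightarrow> frac x = (if 0 \<le> x then x else x + 1)"
proof -
  assume "-1 < x" "x < 1"
  show ?thesis
  proof (cases "0 \<le> x")
    case True then show ?thesis using \<open>x<1\<close> by (simp add: frac_eq)
  next
    case False
    have "frac (x + 1) = x + 1" using \<open>-1<x\<close> False by (simp add: frac_eq)
    then show ?thesis using False by (simp add: frac_1_eq)
  qed
qed

lemma frac_frac_diff: "frac (frac b - frac a) = frac ((b::real) - a)"
proof -
  have "frac b - frac a = (b - a) + of_int (\<lfloor>a\<rfloor> - \<lfloor>b\<rfloor>)" by (simp add: frac_def)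
  then show ?thesis by (metis frac_add_of_int_right)
qed

lemma cdist_lift: "cdist (frac A) (frac B) = frac (B - A)"
  unfolding cdist_def by (rule frac_frac_diff)

lemma cdist_ge0: "cdist a b \<ge> 0" and cdist_lt1: "cdist a b < 1"
  unfolding cdist_def by (auto simp: frac_lt_1)

lemma frac_in01: "frac (x::real) \<in> {0..<1}" by (simp add: frac_lt_1)

lemma cw_lift:
  assumes "(\<alpha>::real) \<le> A" "A < \<alpha> + 1" "\<alpha> \<le> B" "B < \<alpha> + 1" "\<alpha> \<le> C" "C < \<alpha> + 1"
  shows "cyc_weak (frac A) (frac B) (frac C) \<longleftrightarrow>
    (A \<le> B \<and> B \<le> C) \<or> (B \<le> C \<and> C \<le> A) \<or> (C \<le> A \<and> A \<le> B)"
proof -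
  have 1: "cdist (frac A) (frac B) = (if 0 \<le> B - A then B - A else B - A + 1)"
    unfolding cdist_lift using assms by (intro frac_small) auto
  have 2: "cdist (frac B) (frac C) = (if 0 \<le> C - B then C - B else C - B + 1)"
    unfolding cdist_lift using assms by (intro frac_small) auto
  have 3: "cdist (frac C) (frac A) = (if 0 \<le> A - C then A - C else A - C + 1)"
    unfolding cdist_lift using assms by (intro frac_small) auto
  show ?thesis unfolding cyc_weak_def 1 2 3 by (auto split: if_splits)
qed

lemma lift_eq:
  assumes "(\<alpha>::real) \<le> A" "A < \<alpha> + 1" "\<alpha> \<le> B" "B < \<alpha> + 1" "frac A = frac B"
  shows "A = B"
proof -
  have "frac (B - A) = 0" using cdist_lift[of A B] assms(5) by (simp add: cdist_def)
  moreover have "frac (B - A) = (if 0 \<le> B - A then B - A else B - A + 1)"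
    using assms by (intro frac_small) auto
  ultimately show ?thesis using assms by (auto split: if_splits)
qed

lemma cs_lift:
  assumes "(S::real) < T" "T < S'" "S' < S + 1"
  shows "cyc_strict (frac S) (frac T) (frac S')"
proof -
  have "cyc_weak (frac S) (frac T) (frac S')"
    using assms by (subst cw_lift[of S]) auto
  moreover have "frac S \<noteq> frac T" using lift_eq[of S S T] assms by auto
  moreover have "frac T \<noteq> frac S'" using lift_eq[of S T S'] assms by auto
  moreover have "frac S' \<noteq> frac S" using lift_eq[of S S' S] assms by auto
  ultimately show ?thesis unfolding cyc_strict_def by auto
qed

lemma cdist_zero_iff: "a \<in> {0..<1} \<Longrightarrow> b \<in> {0..<1} \<Longrightarrow> cdist a b = 0 \<longleftrightarrow> a = b"
proof -
  assume a: "a \<in> {0..<1}" and b: "b \<in> {0..<1}"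
  have 1: "cdist a b = (if 0 \<le> b - a then b - a else b - a + 1)"
    unfolding cdist_def using a b by (intro frac_small) auto
  show ?thesis unfolding 1 using a b by auto
qed

lemma cdist_sym1: "a \<in> {0..<1} \<Longrightarrow> b \<in> {0..<1} \<Longrightarrow> a \<noteq> b \<Longrightarrow> cdist a b + cdist b a = 1"
proof -
  assume a: "a \<in> {0..<1}" and b: "b \<in> {0..<1}" and ne: "a \<noteq> b"
  have 1: "cdist a b = (if 0 \<le> b - a then b - a else b - a + 1)"
    unfolding cdist_def using a b by (intro frac_small) auto
  have 2: "cdist b a = (if 0 \<le> a - b then a - b else a - b + 1)"
    unfolding cdist_def using a b by (intro frac_small) auto
  show ?thesis unfolding 1 2 using ne by auto
qed

lemma cyc_rot: "cyc_weak a b c = cyc_weak b c a"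
  unfolding cyc_weak_def by (simp add: algebra_simps)

lemma two_orders:
  assumes "a \<in> {0..<1}" "b \<in> {0..<1}" "d \<in> {0..<1}" "a \<noteq> b"
    "cyc_weak a b d" "cyc_weak b a d"
  shows "d = a \<or> d = b"
proof (rule ccontr)
  assume "\<not> (d = a \<or> d = b)"
  then have "cdist a b + cdist b a = 1" "cdist b d + cdist d b = 1" "cdist d a + cdist a d = 1"
    using assms cdist_sym1 by auto
  then show False using assms(5,6) unfolding cyc_weak_def by linarith
qed



lemma out_nbhd_iff: "w \<in> out_nbhd E u \<longleftrightarrow> w = u \<or> (u, w) \<in> E"
  unfolding out_nbhd_def by auto

lemma walk_len_0[simp]: "walk_len 0 x = 0" unfolding walk_len_def by simp

lemma walk_len_Suc: "walk_len (Suc m) x = walk_len m x + cdist (x m) (x (Suc m))"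
  unfolding walk_len_def by simp

lemma is_walk_0[simp]: "is_walk E 0 x" unfolding is_walk_def by simp

lemma is_walk_Suc: "is_walk E (Suc m) x \<longleftrightarrow> is_walk E m x \<and> x (Suc m) \<in> out_nbhd E (x m)"
  unfolding is_walk_def by (auto simp: less_Suc_eq)

lemma walk_len_cong: "(\<And>i. i \<le> m \<Longrightarrow> x i = y i) \<Longrightarrow> walk_len m x = walk_len m y"
  unfolding walk_len_def by (intro sum.cong) auto

lemma is_walk_cong: "(\<And>i. i \<le> m \<Longrightarrow> x i = y i) \<Longrightarrow> is_walk E m x = is_walk E m y"
  unfolding is_walk_def by auto

lemma walk_len_nonneg: "walk_len m x \<ge> 0"
  unfolding walk_len_def by (intro sum_nonneg) (simp add: cdist_ge0)

lemma walk_len_le: "walk_len m x \<le> real m"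
proof -
  have "walk_len m x \<le> (\<Sum>i<m. 1)" unfolding walk_len_def
    by (intro sum_mono) (simp add: cdist_lt1 less_imp_le)
  then show ?thesis by simp
qed

lemma is_walk_mono: "is_walk E m x \<Longrightarrow> k \<le> m \<Longrightarrow> is_walk E k x"
  unfolding is_walk_def by auto

lemma walk_in_V:
  assumes "circ_digraph V E" "is_walk E m x" "x 0 \<in> V"
  shows "i \<le> m \<Longrightarrow> x i \<in> V"
proof (induction i)
  case 0 then show ?case using assms by simp
next
  case (Suc i)
  then have "x (Suc i) \<in> out_nbhd E (x i)" "x i \<in> V" using assms(2) unfolding is_walk_def by auto
  then show ?case using assms(1) unfolding circ_digraph_def out_nbhd_def by auto
qed

lemma walk_in01:
  assumes "circ_digraph V E" "is_walk E m x" "x 0 \<in> V" "i \<le> m"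
  shows "x i \<in> {0..<1}"
  using walk_in_V[OF assms(1-3) assms(4)] assms(1) unfolding circ_digraph_def by auto

lemma frac_add_frac: "frac (a + frac b) = frac (a + (b::real))"
proof -
  have "a + frac b = (a + b) + of_int (- \<lfloor>b\<rfloor>)" by (simp add: frac_def)
  then show ?thesis by (metis frac_add_of_int_right)
qed

lemma lift_walk:
  assumes "\<And>i. i \<le> m \<Longrightarrow> x i \<in> {0..<1}" "frac S = x 0"
  shows "frac (S + walk_len m x) = x m"
  using assms(1)
proof (induction m)
  case 0 then show ?case using assms(2) by simp
next
  case (Suc m)
  have ih: "frac (S + walk_len m x) = x m" using Suc by auto
  have "frac (S + walk_len (Suc m) x) = frac ((S + walk_len m x) + frac (x (Suc m) - x m))"
    by (simp add: walk_len_Suc cdist_def add.assoc)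
  also have "\<dots> = frac ((S + walk_len m x) + (x (Suc m) - x m))"
    by (rule frac_add_frac)
  also have "\<dots> = frac (frac (S + walk_len m x) + (x (Suc m) - x m))"
    using frac_add_frac[of "x (Suc m) - x m" "S + walk_len m x"] by (simp add: add.commute)
  also have "\<dots> = x (Suc m)" using ih Suc.prems[of "Suc m"] by simp
  finally show ?case .
qed

lemma cyc_edge:
  assumes "cyclic_graph V E" "(a, c) \<in> E" "b \<in> V" "cyc_strict a b c"
  shows "(a, b) \<in> E \<and> (b, c) \<in> E"
  using assms unfolding cyclic_graph_def by blast

lemma domination:
  assumes G: "cyclic_graph V E" and x: "is_walk E m x" "x 0 \<in> V"
    and S: "frac S = x 0" and T: "frac T \<in> V" and ST: "S \<le> T"
  shows "\<exists>y. y 0 = frac T \<and> is_walk E m y \<and> S + walk_len m x \<le> T + walk_len m y"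
  using x(1)
proof (induction m)
  case 0
  show ?case by (rule exI[of _ "\<lambda>_. frac T"]) (simp add: ST)
next
  case (Suc m)
  have cd: "circ_digraph V E" using G unfolding cyclic_graph_def by auto
  have V01: "V \<subseteq> {0..<1}" using cd unfolding circ_digraph_def by auto
  have xm: "is_walk E m x" using Suc.prems is_walk_Suc by auto
  from Suc.IH[OF xm] obtain y where y: "y 0 = frac T" "is_walk E m y"
    "S + walk_len m x \<le> T + walk_len m y" by blast
  define Sm where "Sm = S + walk_len m x"
  define Tm where "Tm = T + walk_len m y"
  define S' where "S' = S + walk_len (Suc m) x"
  have x01: "\<And>i. i \<le> Suc m \<Longrightarrow> x i \<in> {0..<1}" using walk_in01[OF cd Suc.prems x(2)] by auto
  have y01: "\<And>i. i \<le> m \<Longrightarrow> y i \<in> {0..<1}" using walk_in01[OF cd y(2)] y(1) T by auto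
  have yV: "y m \<in> V" using walk_in_V[OF cd y(2)] y(1) T by auto
  have fSm: "frac Sm = x m" unfolding Sm_def by (rule lift_walk) (use x01 S in auto)
  have fS': "frac S' = x (Suc m)" unfolding S'_def by (rule lift_walk) (use x01 S in auto)
  have fTm: "frac Tm = y m" unfolding Tm_def by (rule lift_walk) (use y01 y(1) in auto)
  have S'eq: "S' = Sm + cdist (x m) (x (Suc m))" unfolding S'_def Sm_def by (simp add: walk_len_Suc)
  have SmTm: "Sm \<le> Tm" using y(3) unfolding Sm_def Tm_def .
  have step: "x (Suc m) \<in> out_nbhd E (x m)" using Suc.prems is_walk_Suc by auto
  have wl_upd: "\<And>c. walk_len m (y(Suc m := c)) = walk_len m y"
    by (rule walk_len_cong) auto
  have iw_upd: "\<And>c. is_walk E m (y(Suc m := c)) = is_walk E m y"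
    by (rule is_walk_cong) auto
  show ?case
  proof (cases "S' \<le> Tm")
    case True
    let ?y = "y(Suc m := y m)"
    have w1: "is_walk E (Suc m) ?y" using iw_upd y(2) by (simp add: is_walk_Suc out_nbhd_iff)
    have w2: "walk_len (Suc m) ?y = walk_len m y"
      by (simp add: walk_len_Suc wl_upd cdist_def)
    show ?thesis
    proof (rule exI[of _ ?y], intro conjI)
      show "?y 0 = frac T" using y(1) by simp
      show "is_walk E (Suc m) ?y" by (rule w1)
      show "S + walk_len (Suc m) x \<le> T + walk_len (Suc m) ?y"
        unfolding w2 using True unfolding S'_def Tm_def .
    qed
  next
    case False
    let ?y = "y(Suc m := x (Suc m))"
    have lt1: "S' - Tm < 1" using S'eq SmTm cdist_lt1[of "x m" "x (Suc m)"] by linarith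
    have cdeq: "cdist (y m) (x (Suc m)) = S' - Tm"
    proof -
      have "cdist (y m) (x (Suc m)) = frac (S' - Tm)" using cdist_lift[of Tm S'] fTm fS' by simp
      also have "\<dots> = S' - Tm" using False lt1 by (simp add: frac_eq)
      finally show ?thesis .
    qed
    have mem: "x (Suc m) \<in> out_nbhd E (y m)"
    proof (cases "Sm = Tm")
      case True then show ?thesis using fSm fTm step by simp
    next
      case ne: False
      have lt: "Sm < Tm" "Tm < S'" "S' < Sm + 1" using ne SmTm False S'eq cdist_lt1[of "x m" "x (Suc m)"] by auto
      have cs: "cyc_strict (x m) (y m) (x (Suc m))" using cs_lift[OF lt] fSm fTm fS' by simp
      then have "x (Suc m) \<noteq> x m" unfolding cyc_strict_def by auto
      then have "(x m, x (Suc m)) \<in> E" using step by (auto simp: out_nbhd_iff)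
      then show ?thesis using cyc_edge[OF G _ yV cs] by (auto simp: out_nbhd_iff)
    qed
    have w1: "is_walk E (Suc m) ?y" using iw_upd y(2) mem by (simp add: is_walk_Suc)
    have w2: "walk_len (Suc m) ?y = walk_len m y + (S' - Tm)"
      by (simp add: walk_len_Suc wl_upd cdeq)
    show ?thesis
    proof (rule exI[of _ ?y], intro conjI)
      show "?y 0 = frac T" using y(1) by simp
      show "is_walk E (Suc m) ?y" by (rule w1)
      show "S + walk_len (Suc m) x \<le> T + walk_len (Suc m) ?y"
        unfolding w2 Tm_def S'_def by simp
    qed
  qed
qed



lemma concat_walk:
  assumes "is_walk E a y" "u 0 = y a"
  shows "is_walk E b u \<Longrightarrow> is_walk E (a+b) (\<lambda>i. if i \<le> a then y i else u (i - a)) \<and>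
     walk_len (a+b) (\<lambda>i. if i \<le> a then y i else u (i - a)) = walk_len a y + walk_len b u"
proof (induction b)
  case 0
  have "is_walk E a (\<lambda>i. if i \<le> a then y i else u (i - a)) = is_walk E a y"
    by (rule is_walk_cong) auto
  moreover have "walk_len a (\<lambda>i. if i \<le> a then y i else u (i - a)) = walk_len a y"
    by (rule walk_len_cong) auto
  ultimately show ?case using assms by simp
next
  case (Suc b)
  define c where "c = (\<lambda>i. if i \<le> a then y i else u (i - a))"
  have ub: "is_walk E b u" "u (Suc b) \<in> out_nbhd E (u b)" using Suc.prems is_walk_Suc by auto
  have c1: "c (a + b) = u b" unfolding c_def using assms(2) by (cases b) auto
  have c2: "c (Suc (a + b)) = u (Suc b)" unfolding c_def by auto
  have e: "a + Suc b = Suc (a + b)" by simp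
  have ih: "is_walk E (a + b) c \<and> walk_len (a + b) c = walk_len a y + walk_len b u"
    using Suc.IH[OF ub(1)] unfolding c_def .
  have "is_walk E (a + Suc b) c \<and> walk_len (a + Suc b) c = walk_len a y + walk_len (Suc b) u"
    unfolding e is_walk_Suc walk_len_Suc c1 c2 using ih ub(2) by simp
  then show ?case unfolding c_def .
qed

lemma split_walk:
  assumes "is_walk E (a+b) y"
  shows "is_walk E a y" "is_walk E b (\<lambda>i. y (i + a))"
    "walk_len (a+b) y = walk_len a y + walk_len b (\<lambda>i. y (i + a))"
proof -
  show "is_walk E a y" using is_walk_mono[OF assms] by simp
  show "is_walk E b (\<lambda>i. y (i + a))" using assms unfolding is_walk_def
    by (auto simp: add.commute)
  show "walk_len (a+b) y = walk_len a y + walk_len b (\<lambda>i. y (i + a))"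
  proof (induction b)
    case 0 then show ?case by simp
  next
    case (Suc b) then show ?case by (simp add: walk_len_Suc add.commute)
  qed
qed

lemma gamma_set_ne: "{walk_len m x |x. x 0 = v \<and> is_walk E m x} \<noteq> {}"
proof -
  have "is_walk E m (\<lambda>_. v)" unfolding is_walk_def by (simp add: out_nbhd_iff)
  then show ?thesis by auto
qed

lemma gamma_bdd: "bdd_above {walk_len m x |x. x 0 = v \<and> is_walk E m x}"
  by (rule bdd_aboveI[of _ "real m"]) (auto simp: walk_len_le)

lemma gamma_upper: "x 0 = v \<Longrightarrow> is_walk E m x \<Longrightarrow> walk_len m x \<le> gamma E m v"
  unfolding gamma_def by (rule cSup_upper[OF _ gamma_bdd]) auto

lemma gamma_least: "(\<And>x. x 0 = v \<Longrightarrow> is_walk E m x \<Longrightarrow> walk_len m x \<le> b) \<Longrightarrow> gamma E m v \<le> b"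
  unfolding gamma_def by (rule cSup_least[OF gamma_set_ne]) auto

lemma frac_v: "v \<in> {0..<1} \<Longrightarrow> frac (v + of_int z) = v" by simp

lemma amplify:
  assumes G: "cyclic_graph V E" and v: "v \<in> V" and z: "z 0 = v" "is_walk E a z"
    and gt: "walk_len a z > of_int b"
  shows "j \<ge> 1 \<Longrightarrow> \<exists>y. y 0 = v \<and> is_walk E (j*a) y \<and> walk_len (j*a) y > of_int (int j * b)"
proof (induction j)
  case 0 then show ?case by simp
next
  case (Suc j)
  show ?case
  proof (cases "j = 0")
    case True then show ?thesis using z gt by auto
  next
    case False
    have cd: "circ_digraph V E" using G unfolding cyclic_graph_def by auto
    have v01: "v \<in> {0..<1}" using cd v unfolding circ_digraph_def by auto
    from Suc.IH False obtain y where y: "y 0 = v" "is_walk E (j*a) y"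
      "walk_len (j*a) y > of_int (int j * b)" by auto
    define T where "T = v + walk_len (j*a) y"
    define S where "S = v + of_int (int j * b)"
    have fT: "frac T = y (j*a)" unfolding T_def
      by (rule lift_walk) (use walk_in01[OF cd y(2)] y(1) v v01 in auto)
    have fTV: "frac T \<in> V" using fT walk_in_V[OF cd y(2)] y(1) v by auto
    have fS: "frac S = z 0" unfolding S_def frac_add_of_int_right using z(1) v01 by simp
    have ST: "S \<le> T" unfolding S_def T_def using y(3) by simp
    obtain u where u: "u 0 = frac T" "is_walk E a u" "S + walk_len a z \<le> T + walk_len a u"
      using domination[OF G z(2) _ fS fTV ST] z(1) v by auto
    have c: "is_walk E (j*a + a) (\<lambda>i. if i \<le> j*a then y i else u (i - j*a)) \<and>
      walk_len (j*a + a) (\<lambda>i. if i \<le> j*a then y i else u (i - j*a)) = walk_len (j*a) y + walk_len a u"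
      by (rule concat_walk[OF y(2)]) (use u fT in auto)
    have eq: "Suc j * a = j*a + a" by simp
    show ?thesis
      apply (rule exI[of _ "\<lambda>i. if i \<le> j*a then y i else u (i - j*a)"])
      using c y(1) u(3) gt unfolding eq S_def T_def by (auto simp: algebra_simps)
  qed
qed

lemma bound_mult:
  assumes G: "cyclic_graph V E" and v: "v \<in> V"
    and B: "\<And>y. y 0 = v \<Longrightarrow> is_walk E l y \<Longrightarrow> walk_len l y \<le> of_int W"
  shows "y 0 = v \<Longrightarrow> is_walk E (m*l) y \<Longrightarrow> walk_len (m*l) y \<le> of_int (int m * W)"
proof (induction m arbitrary: y)
  case 0 then show ?case by simp
next
  case (Suc m)
  have cd: "circ_digraph V E" using G unfolding cyclic_graph_def by auto
  have v01: "v \<in> {0..<1}" using cd v unfolding circ_digraph_def by auto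
  have eq: "Suc m * l = m*l + l" by simp
  have yw: "is_walk E (m*l + l) y" using Suc.prems(2) unfolding eq .
  note sp = split_walk[OF yw]
  have G1: "walk_len (m*l) y \<le> of_int (int m * W)" using Suc.IH[OF Suc.prems(1) sp(1)] .
  define z where "z = (\<lambda>i. y (i + m*l))"
  define T where "T = v + walk_len (m*l) y"
  define U where "U = v + of_int (int m * W)"
  have fT: "frac T = z 0" unfolding T_def z_def
    by (simp, rule lift_walk) (use walk_in01[OF cd yw] Suc.prems(1) v v01 in auto)
  have z0V: "z 0 \<in> V" unfolding z_def using walk_in_V[OF cd yw] Suc.prems(1) v by auto
  have fU: "frac U \<in> V" unfolding U_def frac_add_of_int_right using v v01 by simp
  have TU: "T \<le> U" unfolding T_def U_def using G1 by simp
  obtain u where u: "u 0 = frac U" "is_walk E l u" "T + walk_len l z \<le> U + walk_len l u"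
    using domination[OF G sp(2)[folded z_def] z0V fT fU TU] by auto
  have "u 0 = v" using u(1) fU v01 unfolding U_def frac_add_of_int_right by simp
  then have "walk_len l u \<le> of_int W" using B u(2) by simp
  then show ?case using sp(3) u(3) unfolding eq z_def[symmetric] T_def U_def
    by (simp add: algebra_simps)
qed



locale cmap =
  fixes H :: "real \<Rightarrow> real" and L :: "real set"
  assumes closed: "t \<in> L \<Longrightarrow> H t \<in> L"
  and shiftL: "t \<in> L \<Longrightarrow> t + of_int z \<in> L"
  and shiftH: "t \<in> L \<Longrightarrow> H (t + of_int z) = H t + of_int z"
  and mono: "s \<in> L \<Longrightarrow> t \<in> L \<Longrightarrow> s \<le> t \<Longrightarrow> H s \<le> H t"
begin

lemma closed_it: "t \<in> L \<Longrightarrow> (H^^n) t \<in> L"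
  by (induction n) (auto simp: closed)

lemma shift_it: "t \<in> L \<Longrightarrow> (H^^n) (t + of_int z) = (H^^n) t + of_int z"
  by (induction n) (auto simp: shiftH closed_it)

lemma mono_it: "s \<in> L \<Longrightarrow> t \<in> L \<Longrightarrow> s \<le> t \<Longrightarrow> (H^^n) s \<le> (H^^n) t"
  by (induction n) (auto simp: mono closed_it)

lemma it_add: "(H^^(a + b)) t = (H^^a) ((H^^b) t)"
  by (simp add: funpow_add)

lemma per_it:
  assumes "u \<in> L" "(H^^l) u = u + of_int W"
  shows "(H^^(l*r)) u = u + of_int (int r * W)"
proof (induction r)
  case 0 then show ?case by simp
next
  case (Suc r)
  have "(H^^(l * Suc r)) u = (H^^l) ((H^^(l*r)) u)" by (simp add: it_add[symmetric] add.commute)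
  also have "\<dots> = (H^^l) u + of_int (int r * W)" using Suc shift_it[OF assms(1), of l "int r * W"] by simp
  finally show ?case using assms(2) by (simp add: algebra_simps)
qed

lemma order_ge:
  assumes u: "u \<in> L" and l: "l \<ge> 1" and per: "(H^^l) u = u + of_int W"
  shows "(H^^k) u \<ge> u + of_int c \<longleftrightarrow> int k * W \<ge> c * int l"
proof
  assume h: "(H^^k) u \<ge> u + of_int c"
  have cl: "(H^^(k*j)) u \<ge> u + of_int (int j * c)" for j
  proof (induction j)
    case 0 then show ?case by simp
  next
    case (Suc j)
    have "(H^^(k * Suc j)) u = (H^^k) ((H^^(k*j)) u)" by (simp add: it_add[symmetric])
    also have "\<dots> \<ge> (H^^k) (u + of_int (int j * c))"
      using mono_it[OF shiftL[OF u] closed_it[OF u] Suc] by simp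
    also have "(H^^k) (u + of_int (int j * c)) = (H^^k) u + of_int (int j * c)" by (rule shift_it[OF u])
    finally show ?case using h by (simp add: algebra_simps)
  qed
  have "(H^^(k*l)) u = u + of_int (int k * W)" using per_it[OF u per, of k] by (simp add: mult.commute)
  then have "real_of_int (c * int l) \<le> real_of_int (int k * W)" using cl[of l] by (simp add: mult.commute)
  then show "int k * W \<ge> c * int l" by (simp only: of_int_le_iff)
next
  assume w: "int k * W \<ge> c * int l"
  show "(H^^k) u \<ge> u + of_int c"
  proof (rule ccontr)
    assume "\<not> ?thesis"
    then have h: "(H^^k) u < u + of_int c" by simp
    have cl: "(H^^(k*Suc j)) u \<le> (H^^k) u + of_int (int j * c)" for j
    proof (induction j)
      case 0 then show ?case by simp
    next
      case (Suc j)
      have e1: "(H^^(k * Suc (Suc j))) u = (H^^k) ((H^^(k*Suc j)) u)" by (simp add: it_add[symmetric])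
      have le: "(H^^(k*Suc j)) u \<le> u + of_int (int (Suc j) * c)"
      proof -
        have "(H^^(k*Suc j)) u \<le> (H^^k) u + of_int (int j * c)" by (rule Suc)
        then show ?thesis using h by (simp add: algebra_simps)
      qed
      have m: "(H^^k) ((H^^(k*Suc j)) u) \<le> (H^^k) (u + of_int (int (Suc j) * c))"
        by (rule mono_it[OF closed_it[OF u] shiftL[OF u] le])
      have e2: "(H^^k) (u + of_int (int (Suc j) * c)) = (H^^k) u + of_int (int (Suc j) * c)"
        by (rule shift_it[OF u])
      show ?case using e1 m e2 by simp
    qed
    have "(H^^(k*l)) u = u + of_int (int k * W)" using per_it[OF u per, of k] by (simp add: mult.commute)
    moreover have "Suc (l - 1) = l" using l by simp
    ultimately have "u + of_int (int k * W) \<le> (H^^k) u + of_int (int (l-1) * c)" using cl[of "l-1"] by simp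
    then have "(of_int (int k * W)::real) < of_int (c + int (l-1) * c)" using h by simp
    then have "int k * W < c + int (l-1) * c" by linarith
    moreover have "c + int (l-1) * c = c * int l" using l by (simp add: algebra_simps of_nat_diff)
    ultimately show False using w by simp
  qed
qed

lemma order_le:
  assumes u: "u \<in> L" and l: "l \<ge> 1" and per: "(H^^l) u = u + of_int W"
  shows "(H^^k) u \<le> u + of_int c \<longleftrightarrow> int k * W \<le> c * int l"
proof
  assume h: "(H^^k) u \<le> u + of_int c"
  have cl: "(H^^(k*j)) u \<le> u + of_int (int j * c)" for j
  proof (induction j)
    case 0 then show ?case by simp
  next
    case (Suc j)
    have "(H^^(k * Suc j)) u = (H^^k) ((H^^(k*j)) u)" by (simp add: it_add[symmetric])
    also have "\<dots> \<le> (H^^k) (u + of_int (int j * c))"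
      using mono_it[OF closed_it[OF u] shiftL[OF u] Suc] by simp
    also have "(H^^k) (u + of_int (int j * c)) = (H^^k) u + of_int (int j * c)" by (rule shift_it[OF u])
    finally show ?case using h by (simp add: algebra_simps)
  qed
  have "(H^^(k*l)) u = u + of_int (int k * W)" using per_it[OF u per, of k] by (simp add: mult.commute)
  then have "real_of_int (int k * W) \<le> real_of_int (c * int l)" using cl[of l] by (simp add: mult.commute)
  then show "int k * W \<le> c * int l" by (simp only: of_int_le_iff)
next
  assume w: "int k * W \<le> c * int l"
  show "(H^^k) u \<le> u + of_int c"
  proof (rule ccontr)
    assume "\<not> ?thesis"
    then have h: "(H^^k) u > u + of_int c" by simp
    have cl: "(H^^(k*Suc j)) u \<ge> (H^^k) u + of_int (int j * c)" for j
    proof (induction j)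
      case 0 then show ?case by simp
    next
      case (Suc j)
      have e1: "(H^^(k * Suc (Suc j))) u = (H^^k) ((H^^(k*Suc j)) u)" by (simp add: it_add[symmetric])
      have le: "u + of_int (int (Suc j) * c) \<le> (H^^(k*Suc j)) u"
      proof -
        have "(H^^(k*Suc j)) u \<ge> (H^^k) u + of_int (int j * c)" by (rule Suc)
        then show ?thesis using h by (simp add: algebra_simps)
      qed
      have m: "(H^^k) ((H^^(k*Suc j)) u) \<ge> (H^^k) (u + of_int (int (Suc j) * c))"
        by (rule mono_it[OF shiftL[OF u] closed_it[OF u] le])
      have e2: "(H^^k) (u + of_int (int (Suc j) * c)) = (H^^k) u + of_int (int (Suc j) * c)"
        by (rule shift_it[OF u])
      show ?case using e1 m e2 by simp
    qed
    have "(H^^(k*l)) u = u + of_int (int k * W)" using per_it[OF u per, of k] by (simp add: mult.commute)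
    moreover have "Suc (l - 1) = l" using l by simp
    ultimately have "u + of_int (int k * W) \<ge> (H^^k) u + of_int (int (l-1) * c)" using cl[of "l-1"] by simp
    then have "(of_int (int k * W)::real) > of_int (c + int (l-1) * c)" using h by simp
    then have "int k * W > c + int (l-1) * c" by linarith
    moreover have "c + int (l-1) * c = c * int l" using l by (simp add: algebra_simps of_nat_diff)
    ultimately show False using w by simp
  qed
qed

end



context cmap begin

lemma comm_it: "(H^^a) ((H^^b) t) = (H^^b) ((H^^a) t)"
  by (simp add: it_add[symmetric] add.commute)

lemma ord_orbit:
  assumes v: "v \<in> L" and l: "l \<ge> 1" and per: "(H^^l) v = v + of_int W"
  shows "(H^^i) v + of_int a \<le> (H^^j) v + of_int b \<longleftrightarrow> int i * W + a * int l \<le> int j * W + b * int l"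
proof (cases "i \<le> j")
  case True
  define u where "u = (H^^i) v"
  have uL: "u \<in> L" unfolding u_def using closed_it[OF v] .
  have pu: "(H^^l) u = u + of_int W" unfolding u_def using comm_it[of l i v] per shift_it[OF v] by simp
  have hj: "(H^^j) v = (H^^(j-i)) u" unfolding u_def using True by (simp add: it_add[symmetric])
  have "(H^^i) v + of_int a \<le> (H^^j) v + of_int b \<longleftrightarrow> (H^^(j-i)) u \<ge> u + of_int (a - b)"
    unfolding hj u_def by (simp add: algebra_simps)
  also have "\<dots> \<longleftrightarrow> int (j-i) * W \<ge> (a - b) * int l" by (rule order_ge[OF uL l pu])
  also have "\<dots> \<longleftrightarrow> int i * W + a * int l \<le> int j * W + b * int l"
    using True by (simp add: of_nat_diff algebra_simps)
  finally show ?thesis .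
next
  case False
  define u where "u = (H^^j) v"
  have uL: "u \<in> L" unfolding u_def using closed_it[OF v] .
  have pu: "(H^^l) u = u + of_int W" unfolding u_def using comm_it[of l j v] per shift_it[OF v] by simp
  have hi: "(H^^i) v = (H^^(i-j)) u" unfolding u_def using False by (simp add: it_add[symmetric])
  have "(H^^i) v + of_int a \<le> (H^^j) v + of_int b \<longleftrightarrow> (H^^(i-j)) u \<le> u + of_int (b - a)"
    unfolding hi u_def by (simp add: algebra_simps)
  also have "\<dots> \<longleftrightarrow> int (i-j) * W \<le> (b - a) * int l" by (rule order_le[OF uL l pu])
  also have "\<dots> \<longleftrightarrow> int i * W + a * int l \<le> int j * W + b * int l"
    using False by (simp add: of_nat_diff algebra_simps)
  finally show ?thesis .
qed

end

lemma bezout_rep: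
  fixes W :: int and l :: nat
  assumes "coprime W (int l)" "l \<ge> 1"
  shows "\<exists>i::nat. \<exists>c::int. int i * W - c * int l = n"
proof -
  obtain s t where st: "s * W + t * int l = 1"
    using bezout_int[of W "int l"] assms(1) by (auto simp: coprime_iff_gcd_eq_1)
  define i where "i = nat ((n*s) mod int l)"
  define c where "c = -(n*t) - ((n*s) div int l) * W"
  have ii: "int i = (n*s) mod int l" unfolding i_def using assms(2) by simp
  have dm: "(n*s) mod int l + int l * ((n*s) div int l) = n*s"
    using div_mult_mod_eq[of "n*s" "int l"] by (simp add: mult.commute add.commute)
  have dm2: "W * ((n*s) mod int l) + W * (int l * ((n*s) div int l)) = W * (n*s)"
    using dm by (metis distrib_left)
  have "int i * W - c * int l = W * (n*s) + n * t * int l"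
    unfolding ii c_def using dm2 by (simp add: algebra_simps)
  also have "\<dots> = n * (s * W + t * int l)" by (simp add: algebra_simps)
  finally show ?thesis using st by auto
qed

locale cper = cmap +
  fixes v :: real and l :: nat and W :: int
  assumes vL: "v \<in> L" and l1: "l \<ge> 1" and per: "(H^^l) v = v + of_int W"
    and cop: "coprime W (int l)"
begin

definition Q :: "int \<Rightarrow> real" where
  "Q n = (SOME t. \<exists>i c. int i * W - c * int l = n \<and> t = (H^^i) v - of_int c)"

lemma ord': "(H^^i) v - of_int a \<le> (H^^j) v - of_int b \<longleftrightarrow> int i * W - a * int l \<le> int j * W - b * int l"
  using ord_orbit[OF vL l1 per, of i "-a" j "-b"] by simp

lemma Q_rep: "int i * W - c * int l = n \<Longrightarrow> Q n = (H^^i) v - of_int c"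
proof -
  assume r: "int i * W - c * int l = n"
  have "\<exists>t. \<exists>i c. int i * W - c * int l = n \<and> t = (H^^i) v - of_int c" using r by blast
  then have "\<exists>i' c'. int i' * W - c' * int l = n \<and> Q n = (H^^i') v - of_int c'"
    unfolding Q_def by (rule someI_ex)
  then obtain i' c' where r': "int i' * W - c' * int l = n" "Q n = (H^^i') v - of_int c'" by blast
  have "(H^^i') v - of_int c' = (H^^i) v - of_int c"
    using ord'[of i' c' i c] ord'[of i c i' c'] r r' by simp
  then show ?thesis using r' by simp
qed

lemma Q_ex: "\<exists>i c. int i * W - c * int l = n"
  using bezout_rep[OF cop l1] .

lemma Q_le_iff: "Q n \<le> Q n' \<longleftrightarrow> n \<le> n'"
proof -
  obtain i c where r: "int i * W - c * int l = n" using Q_ex by blast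
  obtain i' c' where r': "int i' * W - c' * int l = n'" using Q_ex by blast
  show ?thesis using Q_rep[OF r] Q_rep[OF r'] ord'[of i c i' c'] r r' by simp
qed

lemma Q_less_iff: "Q n < Q n' \<longleftrightarrow> n < n'"
  using Q_le_iff[of n' n] by auto

lemma Q_shift: "Q (n + z * int l) = Q n + of_int z"
proof -
  obtain i c where r: "int i * W - c * int l = n" using Q_ex by blast
  have r2: "int i * W - (c - z) * int l = n + z * int l" using r by (simp add: algebra_simps)
  show ?thesis using Q_rep[OF r] Q_rep[OF r2] by simp
qed

lemma Q_L: "Q n \<in> L"
proof -
  obtain i c where r: "int i * W - c * int l = n" using Q_ex by blast
  show ?thesis using Q_rep[OF r] shiftL[OF closed_it[OF vL], of i "-c"] by simp
qed

lemma Q_H: "H (Q n) = Q (n + W)"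
proof -
  obtain i c where r: "int i * W - c * int l = n" using Q_ex by blast
  have r2: "int (Suc i) * W - c * int l = n + W" using r by (simp add: algebra_simps)
  have "H (Q n) = H ((H^^i) v + of_int (-c))" using Q_rep[OF r] by simp
  also have "\<dots> = (H^^Suc i) v - of_int c" using shiftH[OF closed_it[OF vL], of i "-c"] by simp
  finally show ?thesis using Q_rep[OF r2] by simp
qed

lemma Q_0: "Q 0 = v"
  using Q_rep[of 0 0 0] by simp

end



locale chom = cper +
  fixes V :: "real set" and E :: "(real \<times> real) set" and Ob :: "real set"
  assumes G: "cyclic_graph V E" and OV: "Ob \<subseteq> V" and Ldef: "L = {t. frac t \<in> Ob}"
    and Hge: "t \<in> L \<Longrightarrow> t \<le> H t" and Hlt: "t \<in> L \<Longrightarrow> H t < t + 1"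
    and Hedge: "t \<in> L \<Longrightarrow> frac (H t) \<in> out_nbhd E (frac t)"
    and W1: "W \<ge> 1"
begin

lemma fQ_O: "frac (Q n) \<in> Ob" using Q_L Ldef by auto

lemma fQ_V: "frac (Q n) \<in> V" using fQ_O OV by auto

lemma Q_l: "Q (n + int l) = Q n + 1" using Q_shift[of n 1] by simp

lemma Q_W_bounds: "Q n < Q (n + W)" "Q (n + W) < Q n + 1"
  using Q_less_iff[of n "n+W"] W1 Hlt[OF Q_L] Q_H by auto

lemma W_less_l: "W < int l"
proof -
  have "Q (0 + W) < Q (0 + int l)" using Q_W_bounds(2)[of 0] Q_l[of 0] by simp
  then show ?thesis using Q_less_iff by simp
qed

lemma edge_W: "(frac (Q n), frac (Q (n + W))) \<in> E"
proof -
  have m: "frac (Q (n + W)) \<in> out_nbhd E (frac (Q n))" using Hedge[OF Q_L] Q_H by simp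
  have "frac (Q (n + W)) \<noteq> frac (Q n)"
    using lift_eq[of "Q n" "Q (n+W)" "Q n"] Q_W_bounds[of n] by auto
  then show ?thesis using m by (auto simp: out_nbhd_iff)
qed

lemma edge_s:
  assumes "1 \<le> s" "s \<le> W"
  shows "(frac (Q n), frac (Q (n + s))) \<in> E"
proof (cases "s = W")
  case True then show ?thesis using edge_W by simp
next
  case False
  have lt: "Q n < Q (n + s)" "Q (n + s) < Q (n + W)" "Q (n + W) < Q n + 1"
    using Q_less_iff assms False Q_W_bounds by auto
  show ?thesis using cyc_edge[OF G edge_W fQ_V cs_lift[OF lt]] by simp
qed

lemma two_W: "2 * W < int l"
proof (rule ccontr)
  assume "\<not> ?thesis"
  then have s: "1 \<le> int l - W" "int l - W \<le> W" using W_less_l by auto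
  have e1: "(frac (Q W), frac (Q (W + (int l - W)))) \<in> E" by (rule edge_s[OF s])
  have "Q (W + (int l - W)) = Q 0 + 1" using Q_l[of 0] by simp
  then have "frac (Q (W + (int l - W))) = frac (Q 0)" by (simp add: frac_1_eq)
  then have e1': "(frac (Q W), frac (Q 0)) \<in> E" using e1 by simp
  have e2: "(frac (Q 0), frac (Q W)) \<in> E" using edge_W[of 0] by simp
  show False using e1' e2 G unfolding cyclic_graph_def circ_digraph_def by blast
qed

lemma fQ_mod: "frac (Q (int (m mod l))) = frac (Q (int m))"
proof -
  have "int m = int (m mod l) + int (m div l) * int l"
    by (metis of_nat_add of_nat_mult mod_div_mult_eq add.commute)
  then have "Q (int m) = Q (int (m mod l)) + of_int (int (m div l))" using Q_shift by simp
  then show ?thesis by (metis frac_add_of_int_right)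
qed

lemma Q_range: "0 \<le> n \<Longrightarrow> n < int l \<Longrightarrow> v \<le> Q n \<and> Q n < v + 1"
  using Q_le_iff[of 0 n] Q_less_iff[of n "int l"] Q_l[of 0] Q_0 by auto

lemma hom: "cyc_hom l (nat W) Ob (E \<inter> (Ob \<times> Ob)) (\<lambda>m. frac (Q (int m)))"
  unfolding cyc_hom_def
proof (intro conjI allI impI)
  fix i assume "i < l"
  show "frac (Q (int i)) \<in> Ob" by (rule fQ_O)
next
  fix i s assume i: "i < l" and s: "1 \<le> s \<and> s \<le> nat W"
  have "(frac (Q (int i)), frac (Q (int i + int s))) \<in> E" using edge_s[of "int s" "int i"] s W1 by auto
  then show "(frac (Q (int i)), frac (Q (int ((i + s) mod l)))) \<in> E \<inter> Ob \<times> Ob"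
    using fQ_mod[of "i+s"] fQ_O by simp
next
  fix i j k assume ijk: "i < l" "j < l" "k < l"
    and cw: "cyc_weak (real i / real l) (real j / real l) (real k / real l)"
  have l0: "real l > 0" using l1 by simp
  have fr: "\<And>m. m < l \<Longrightarrow> frac (real m / real l) = real m / real l"
    using l0 by (simp add: frac_eq)
  have le_iff: "\<And>a b. real a / real l \<le> real b / real l \<longleftrightarrow> Q (int a) \<le> Q (int b)"
    using l0 Q_le_iff by (simp add: divide_le_cancel)
  have rng: "\<And>m. m < l \<Longrightarrow> 0 \<le> real m / real l \<and> real m / real l < 0 + 1"
    using l0 by simp
  have cw': "(real i / real l \<le> real j / real l \<and> real j / real l \<le> real k / real l) \<or>
      (real j / real l \<le> real k / real l \<and> real k / real l \<le> real i / real l) \<or>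
      (real k / real l \<le> real i / real l \<and> real i / real l \<le> real j / real l)"
    using cw_lift[of 0 "real i / real l" "real j / real l" "real k / real l"] rng ijk fr cw by simp
  have "(Q i \<le> Q j \<and> Q j \<le> Q k) \<or> (Q j \<le> Q k \<and> Q k \<le> Q i) \<or> (Q k \<le> Q i \<and> Q i \<le> Q j)"
    using cw' unfolding le_iff .
  then show "cyc_weak (frac (Q (int i))) (frac (Q (int j))) (frac (Q (int k)))"
    using cw_lift[of v "Q i" "Q j" "Q k"] Q_range ijk by simp
next
  assume "1 \<le> nat W"
  have l2: "1 < l" using two_W W1 by simp
  have "frac (Q 0) \<noteq> frac (Q 1)"
    using lift_eq[of "Q 0" "Q 0" "Q 1"] Q_less_iff[of 0 1] Q_l[of 0] Q_less_iff[of 1 "int l"] l2 by auto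
  then show "\<exists>i<l. \<exists>j<l. frac (Q (int i)) \<noteq> frac (Q (int j))"
    using l2 by (intro exI[of _ 0] exI[of _ 1]) auto
qed

end



lemma walk_len_split: "walk_len (a+b) y = walk_len a y + walk_len b (\<lambda>i. y (i + a))"
proof (induction b)
  case 0 then show ?case by simp
next
  case (Suc b) then show ?case by (simp add: walk_len_Suc add.commute)
qed

lemma walk_len_mono: "a \<le> b \<Longrightarrow> walk_len a y \<le> walk_len b y"
  using walk_len_split[of a "b - a" y] walk_len_nonneg[of "b-a"] by simp

lemma hom_gain:
  assumes G: "cyclic_graph V E" and WV: "Wf \<subseteq> V"
    and h: "cyc_hom n k Wf (E \<inter> (Wf \<times> Wf)) f" and nk: "2*k < n" and k1: "k \<ge> 1"
  shows "\<exists>z. z 0 = f 0 \<and> is_walk E (n*r) z \<and> walk_len (n*r) z = real (r*k)"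
proof -
  have cd: "circ_digraph V E" using G unfolding cyclic_graph_def by auto
  have V01: "V \<subseteq> {0..<1}" using cd unfolding circ_digraph_def by auto
  have noloop: "\<And>a. (a,a) \<notin> E" and noopp: "\<And>a b. (a,b) \<in> E \<Longrightarrow> (b,a) \<notin> E"
    using cd unfolding circ_digraph_def by auto
  have n3: "n \<ge> 3" using nk k1 by simp
  have fW: "\<And>i. i < n \<Longrightarrow> f i \<in> Wf" using h unfolding cyc_hom_def by auto
  have edges0: "\<And>i s. i < n \<Longrightarrow> 1 \<le> s \<Longrightarrow> s \<le> k \<Longrightarrow> (f i, f ((i + s) mod n)) \<in> E"
    using h unfolding cyc_hom_def by auto
  have ord: "\<And>i j l. i < n \<Longrightarrow> j < n \<Longrightarrow> l < n \<Longrightarrow>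
      cyc_weak (real i / real n) (real j / real n) (real l / real n) \<Longrightarrow> cyc_weak (f i) (f j) (f l)"
    using h unfolding cyc_hom_def by blast
  have ord3: "cyc_weak (f i) (f j) (f l)" if "i \<le> j" "j \<le> l" "l < n" for i j l
  proof -
    have n0: "real n > 0" using n3 by simp
    have "cyc_weak (frac (real i / real n)) (frac (real j / real n)) (frac (real l / real n))"
      using that n0 by (subst cw_lift[of 0]) (auto simp: divide_right_mono)
    moreover have "\<And>m. m < n \<Longrightarrow> frac (real m / real n) = real m / real n" using n0 by (simp add: frac_eq)
    ultimately show ?thesis using ord that by simp
  qed
  define xf where "xf = (\<lambda>j. f (j mod n))"
  have xf01: "\<And>j. xf j \<in> {0..<1}"
  proof -
    fix j have "f (j mod n) \<in> Wf" using fW[of "j mod n"] n3 by simp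
    then show "xf j \<in> {0..<1}" unfolding xf_def using WV V01 by auto
  qed
  have edges: "\<And>a s. 1 \<le> s \<Longrightarrow> s \<le> k \<Longrightarrow> (xf a, xf (a + s)) \<in> E"
  proof -
    fix a s assume "1 \<le> s" "s \<le> k"
    then have "(f (a mod n), f ((a mod n + s) mod n)) \<in> E" using edges0 n3 by auto
    moreover have "(a mod n + s) mod n = (a + s) mod n" by (simp add: mod_add_left_eq)
    ultimately show "(xf a, xf (a + s)) \<in> E" unfolding xf_def by simp
  qed
  have xfn: "\<And>j. xf (j + n) = xf j" unfolding xf_def by simp
  have f001: "f 0 \<in> {0..<1}" using xf01[of 0] by (simp add: xf_def)
  have lift: "\<And>i. frac (f 0 + walk_len i xf) = xf i"
    by (rule lift_walk) (use xf01 f001 in \<open>auto simp: xf_def\<close>)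
  define T where "T = walk_len n xf"
  have cpos: "\<And>j. cdist (xf j) (xf (Suc j)) > 0"
  proof -
    fix j
    have "xf j \<noteq> xf (Suc j)" using edges[of 1 j] k1 noloop by auto
    then show "cdist (xf j) (xf (Suc j)) > 0" using cdist_zero_iff xf01 cdist_ge0
      by (metis less_eq_real_def)
  qed
  have Tint: "T \<in> \<int>"
  proof -
    have "cdist (frac (f 0)) (frac (f 0 + T)) = frac T" using cdist_lift[of "f 0" "f 0 + T"] by simp
    moreover have "frac (f 0 + T) = f 0" using lift[of n] unfolding T_def xf_def by simp
    moreover have "frac (f 0) = f 0" using xf01[of 0] unfolding xf_def by simp
    ultimately have "frac T = 0" by (simp add: cdist_def)
    then show ?thesis by simp
  qed
  have Tpos: "T > 0"
  proof -
    have "walk_len 1 xf \<le> walk_len n xf" using walk_len_mono n3 by simp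
    moreover have "walk_len 1 xf > 0" using cpos[of 0] by (simp add: walk_len_def)
    ultimately show ?thesis unfolding T_def by simp
  qed
  have T1: "T = 1"
  proof (rule ccontr)
    assume "T \<noteq> 1"
    have T2: "T \<ge> 2"
    proof -
      obtain zz where zz: "T = of_int zz" using Tint by (auto elim: Ints_cases)
      have "zz > 0" "zz \<noteq> 1" using zz Tpos \<open>T \<noteq> 1\<close> by auto
      then have "zz \<ge> 2" by simp
      then show ?thesis using zz by simp
    qed
    define m where "m = (LEAST i. walk_len i xf \<ge> 1)"
    have ex: "walk_len n xf \<ge> 1" using T2 unfolding T_def by simp
    have m1: "walk_len m xf \<ge> 1" unfolding m_def using ex by (rule LeastI)
    have mn: "m \<le> n" unfolding m_def using ex by (rule Least_le)
    have less: "\<And>i. i < m \<Longrightarrow> walk_len i xf < 1" unfolding m_def using not_less_Least by force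
    have m0: "m \<noteq> 0" using m1 by (cases m) auto
    have wl1: "walk_len 1 xf < 1" using cdist_lt1 by (simp add: walk_len_def)
    have m2: "m \<ge> 2"
    proof (rule ccontr)
      assume "\<not> m \<ge> 2"
      then have "m = 1" using m0 by simp
      then show False using m1 wl1 by simp
    qed
    obtain p where p: "m = Suc p" using m0 by (cases m) auto
    have wp: "walk_len p xf < 1" using less p by simp
    have wm: "walk_len m xf = walk_len p xf + cdist (xf p) (xf m)" using p walk_len_Suc by simp
    have mltn: "m < n"
    proof (rule ccontr)
      assume "\<not> m < n"
      then have "m = n" using mn by simp
      then have "T < 2" using wm wp cdist_lt1[of "xf p" "xf m"] unfolding T_def by simp
      then show False using T2 by simp
    qed
    have fxf: "\<And>i. i < n \<Longrightarrow> xf i = f i" unfolding xf_def by simp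
    have cdp: "cdist (f 0) (f p) = walk_len p xf"
    proof -
      have "cdist (frac (f 0)) (frac (f 0 + walk_len p xf)) = frac (walk_len p xf)"
        using cdist_lift by simp
      moreover have "frac (f 0 + walk_len p xf) = f p" using lift[of p] fxf p mltn by simp
      moreover have "frac (f 0) = f 0" using xf01[of 0] unfolding xf_def by simp
      moreover have "frac (walk_len p xf) = walk_len p xf" using wp walk_len_nonneg by (simp add: frac_eq)
      ultimately show ?thesis by simp
    qed
    have cw: "cyc_weak (f 0) (f p) (f m)" using ord3[of 0 p m] p mltn by simp
    have fm: "f m = f 0"
    proof -
      have "cdist (f 0) (f p) + cdist (f p) (f m) + cdist (f m) (f 0) \<le> 1"
        using cw unfolding cyc_weak_def .
      then have "cdist (f m) (f 0) \<le> 0" using cdp wm m1 fxf p mltn by simp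
      then have "cdist (f m) (f 0) = 0" using cdist_ge0 by (metis antisym)
      moreover have "f m \<in> {0..<1}" "f 0 \<in> {0..<1}" using xf01[of m] fxf[of m] mltn f001 by auto
      ultimately show ?thesis using cdist_zero_iff[of "f m" "f 0"] by simp
    qed
    have ab: "f 0 \<noteq> f 1" using edges[of 1 0] k1 noloop fxf n3 by auto
    have tail: "\<And>j. m < j \<Longrightarrow> j < n \<Longrightarrow> f j = f 0 \<or> f j = f 1"
    proof -
      fix j assume j: "m < j" "j < n"
      have c1: "cyc_weak (f 0) (f 1) (f j)" using ord3[of 0 1 j] j m2 by simp
      have c2: "cyc_weak (f 1) (f 0) (f j)" using ord3[of 1 m j] j m2 fm by simp
      have mem: "f 0 \<in> {0..<1}" "f 1 \<in> {0..<1}" "f j \<in> {0..<1}"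
        using xf01[of 1] xf01[of j] fxf[of 1] fxf[of j] j n3 f001 by auto
      show "f j = f 0 \<or> f j = f 1"
        using two_orders[OF mem ab c1 c2] by auto
    qed
    have en: "(xf (n - 1), xf (n - 1 + 1)) \<in> E" using edges[of 1 "n-1"] k1 by simp
    have en': "(f (n-1), f 0) \<in> E" using en n3 fxf[of "n-1"] unfolding xf_def by simp
    show False
    proof (cases "m = n - 1")
      case True then show ?thesis using en' fm noloop by simp
    next
      case False
      then have "f (n-1) = f 0 \<or> f (n-1) = f 1" using tail[of "n-1"] mltn by simp
      moreover have e01: "(f 0, f 1) \<in> E" using edges[of 1 0] k1 fxf n3 by simp
      ultimately show ?thesis using en' noloop noopp by auto
    qed
  qed
  have perT: "\<And>i. walk_len (n + i) xf = walk_len i xf + 1"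
  proof -
    fix i
    have "walk_len (n + i) xf = walk_len n xf + walk_len i (\<lambda>j. xf (j + n))" by (rule walk_len_split)
    then show "walk_len (n + i) xf = walk_len i xf + 1" using T1 xfn unfolding T_def by simp
  qed
  have perR: "\<And>r. walk_len (r * n) xf = real r"
  proof -
    fix r show "walk_len (r * n) xf = real r"
    proof (induction r)
      case 0 then show ?case by simp
    next
      case (Suc r)
      have "walk_len (Suc r * n) xf = walk_len (n + r * n) xf" by simp
      also have "\<dots> = walk_len (r*n) xf + 1" by (rule perT)
      finally show ?case using Suc by simp
    qed
  qed
  have window: "\<And>a. cdist (xf a) (xf (a + k)) = walk_len (a + k) xf - walk_len a xf"
  proof -
    fix a
    define D where "D = walk_len (a + k) xf - walk_len a xf"
    have D0: "D \<ge> 0" unfolding D_def using walk_len_mono[of a "a+k"] by simp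
    have D1: "D \<le> 1"
    proof -
      have "walk_len (a + k) xf \<le> walk_len (n + a) xf" using walk_len_mono nk by simp
      then show ?thesis unfolding D_def using perT[of a] by simp
    qed
    have fr: "cdist (xf a) (xf (a + k)) = frac D"
    proof -
      have "cdist (frac (f 0 + walk_len a xf)) (frac (f 0 + walk_len (a+k) xf)) = frac D"
        using cdist_lift unfolding D_def by simp
      then show ?thesis using lift by simp
    qed
    have "D \<noteq> 1"
    proof
      assume "D = 1"
      then have "cdist (xf a) (xf (a + k)) = 0" using fr by simp
      then have "xf a = xf (a + k)" using cdist_zero_iff xf01 by blast
      then show False using edges[of k a] k1 noloop by simp
    qed
    then show "cdist (xf a) (xf (a + k)) = walk_len (a + k) xf - walk_len a xf"
      using fr D0 D1 unfolding D_def by (simp add: frac_eq)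
  qed
  define z where "z = (\<lambda>t. xf (t * k))"
  have zw: "is_walk E L z" for L
    unfolding is_walk_def z_def using edges[of k] k1 by (auto simp: out_nbhd_iff add.commute[of k])
  have zl: "walk_len L z = walk_len (L * k) xf" for L
  proof (induction L)
    case 0 then show ?case by simp
  next
    case (Suc L)
    have "walk_len (Suc L) z = walk_len (L * k) xf + cdist (xf (L*k)) (xf (L*k + k))"
      using Suc by (simp add: walk_len_Suc z_def add.commute)
    also have "\<dots> = walk_len (Suc L * k) xf" using window[of "L*k"] by (simp add: add.commute)
    finally show ?case .
  qed
  show ?thesis
  proof (intro exI conjI)
    show "z 0 = f 0" unfolding z_def xf_def by simp
    show "is_walk E (n * r) z" by (rule zw)
    show "walk_len (n * r) z = real (r * k)" using zl[of "n*r"] perR[of "r*k"] by (simp add: algebra_simps)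
  qed
qed



lemma wf_fin_set_bdd: "bdd_above {real k / real n | n k. 2 * k < n \<and> (\<exists>f. cyc_hom n k W F f)}"
proof (rule bdd_aboveI[of _ "1/2"])
  fix x assume "x \<in> {real k / real n | n k. 2 * k < n \<and> (\<exists>f. cyc_hom n k W F f)}"
  then obtain n k where x: "x = real k / real n" "2 * k < n" by auto
  then have "real k / real n \<le> 1/2" by (simp add: divide_le_eq)
  then show "x \<le> 1/2" using x by simp
qed

lemma wf_fin_set_ne: "w \<in> W \<Longrightarrow> {real k / real n | n k. 2 * k < n \<and> (\<exists>f. cyc_hom n k W F f)} \<noteq> {}"
proof -
  assume w: "w \<in> W"
  have "cyc_hom 1 0 W F (\<lambda>_. w)" unfolding cyc_hom_def using w by (auto simp: cyc_weak_def cdist_def)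
  then have "real 0 / real 1 \<in> {real k / real n | n k. 2 * k < n \<and> (\<exists>f. cyc_hom n k W F f)}"
    by fastforce
  then show ?thesis by blast
qed

lemma wf_fin_le: "w \<in> W \<Longrightarrow> wf_fin W F \<le> 1/2"
  unfolding wf_fin_def
  by (rule cSup_least[OF wf_fin_set_ne]) (auto simp: divide_le_eq)

lemma wf_fin_ge: "cyc_hom n k W F f \<Longrightarrow> 2 * k < n \<Longrightarrow> real k / real n \<le> wf_fin W F"
  unfolding wf_fin_def by (rule cSup_upper[OF _ wf_fin_set_bdd]) blast

lemma wfr_bdd: "bdd_above {wf_fin W (E \<inter> (W \<times> W)) | W. finite W \<and> W \<subseteq> V \<and> W \<noteq> {}}"
proof (rule bdd_aboveI[of _ "1/2"])
  fix x assume "x \<in> {wf_fin W (E \<inter> (W \<times> W)) | W. finite W \<and> W \<subseteq> V \<and> W \<noteq> {}}"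
  then obtain W where "x = wf_fin W (E \<inter> (W \<times> W))" "W \<noteq> {}" by blast
  then show "x \<le> 1/2" using wf_fin_le by blast
qed

lemma wfr_lower: "finite W \<Longrightarrow> W \<subseteq> V \<Longrightarrow> W \<noteq> {} \<Longrightarrow> cyc_hom n k W (E \<inter> (W \<times> W)) f \<Longrightarrow> 2 * k < n
   \<Longrightarrow> real k / real n \<le> winding_fraction V E"
proof -
  assume a: "finite W" "W \<subseteq> V" "W \<noteq> {}" "cyc_hom n k W (E \<inter> (W \<times> W)) f" "2 * k < n"
  have "real k / real n \<le> wf_fin W (E \<inter> (W \<times> W))" by (rule wf_fin_ge[OF a(4,5)])
  also have "\<dots> \<le> winding_fraction V E" unfolding winding_fraction_def
    by (rule cSup_upper[OF _ wfr_bdd]) (use a in blast)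
  finally show ?thesis .
qed

lemma wfr_upper:
  assumes "v \<in> V"
    and B: "\<And>W n k f. finite W \<Longrightarrow> W \<subseteq> V \<Longrightarrow> W \<noteq> {} \<Longrightarrow> cyc_hom n k W (E \<inter> (W \<times> W)) f
       \<Longrightarrow> 2 * k < n \<Longrightarrow> real k / real n \<le> b"
  shows "winding_fraction V E \<le> b"
  unfolding winding_fraction_def
proof (rule cSup_least)
  show "{wf_fin W (E \<inter> W \<times> W) |W. finite W \<and> W \<subseteq> V \<and> W \<noteq> {}} \<noteq> {}"
    using assms(1) by (auto intro!: exI[of _ "{v}"])
next
  fix x assume "x \<in> {wf_fin W (E \<inter> W \<times> W) |W. finite W \<and> W \<subseteq> V \<and> W \<noteq> {}}"
  then obtain W where W: "x = wf_fin W (E \<inter> W \<times> W)" "finite W" "W \<subseteq> V" "W \<noteq> {}" by blast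
  then obtain w where w: "w \<in> W" by auto
  show "x \<le> b" unfolding W(1) wf_fin_def
    by (rule cSup_least[OF wf_fin_set_ne[OF w]]) (use B W in auto)
qed



lemma finite_argmax:
  fixes g :: "'a \<Rightarrow> real"
  assumes "finite S" "S \<noteq> {}"
  shows "\<exists>w\<in>S. \<forall>w'\<in>S. g w' \<le> g w"
proof -
  have "Max (g ` S) \<in> g ` S" using assms by simp
  then obtain w where "w \<in> S" "g w = Max (g ` S)" by auto
  moreover have "\<forall>w'\<in>S. g w' \<le> Max (g ` S)" using assms by simp
  ultimately show ?thesis by metis
qed

lemma greedy_exists:
  assumes G: "cyclic_graph V E" and OV: "Ob \<subseteq> V" and fin: "finite Ob"
  shows "\<exists>H. cmap H {t. frac t \<in> Ob} \<and> (\<forall>t. frac t \<in> Ob \<longrightarrow> t \<le> H t \<and> H t < t + 1 \<and>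
     frac (H t) \<in> out_nbhd E (frac t) \<and> frac (H t) \<in> Ob \<and>
     (\<forall>w \<in> out_nbhd E (frac t) \<inter> Ob. t + cdist (frac t) w \<le> H t))"
proof -
  have cd: "circ_digraph V E" using G unfolding cyclic_graph_def by auto
  have V01: "V \<subseteq> {0..<1}" using cd unfolding circ_digraph_def by auto
  have ex: "\<forall>u\<in>Ob. \<exists>w. w \<in> out_nbhd E u \<inter> Ob \<and> (\<forall>w'\<in>out_nbhd E u \<inter> Ob. cdist u w' \<le> cdist u w)"
  proof
    fix u assume u: "u \<in> Ob"
    have "finite (out_nbhd E u \<inter> Ob)" "out_nbhd E u \<inter> Ob \<noteq> {}" using fin u by (auto simp: out_nbhd_iff)
    from finite_argmax[OF this, of "cdist u"] show "\<exists>w. w \<in> out_nbhd E u \<inter> Ob \<and> (\<forall>w'\<in>out_nbhd E u \<inter> Ob. cdist u w' \<le> cdist u w)"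
      by blast
  qed
  define F where "F u = (SOME w. w \<in> out_nbhd E u \<inter> Ob \<and> (\<forall>w'\<in>out_nbhd E u \<inter> Ob. cdist u w' \<le> cdist u w))" for u
  have Fp: "\<And>u. u \<in> Ob \<Longrightarrow> F u \<in> out_nbhd E u \<inter> Ob \<and> (\<forall>w'\<in>out_nbhd E u \<inter> Ob. cdist u w' \<le> cdist u (F u))"
  proof -
    fix u assume "u \<in> Ob"
    then have "\<exists>w. w \<in> out_nbhd E u \<inter> Ob \<and> (\<forall>w'\<in>out_nbhd E u \<inter> Ob. cdist u w' \<le> cdist u w)"
      using ex by blast
    then show "F u \<in> out_nbhd E u \<inter> Ob \<and> (\<forall>w'\<in>out_nbhd E u \<inter> Ob. cdist u w' \<le> cdist u (F u))"
      unfolding F_def by (rule someI_ex)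
  qed
  define H where "H t = t + cdist (frac t) (F (frac t))" for t
  have fH: "\<And>t. frac t \<in> Ob \<Longrightarrow> frac (H t) = F (frac t)"
  proof -
    fix t assume t: "frac t \<in> Ob"
    have F01: "F (frac t) \<in> {0..<1}" using Fp[OF t] OV V01 by auto
    have "frac (H t) = frac (t + (F (frac t) - frac t))" unfolding H_def cdist_def by (rule frac_add_frac)
    also have "\<dots> = frac (F (frac t) + of_int \<lfloor>t\<rfloor>)" by (simp add: frac_def algebra_simps)
    also have "\<dots> = F (frac t)" using F01 by simp
    finally show "frac (H t) = F (frac t)" .
  qed
  have Hge: "\<And>t. t \<le> H t" unfolding H_def using cdist_ge0 by simp
  have Hlt: "\<And>t. H t < t + 1" unfolding H_def using cdist_lt1 by simp
  have Hout: "\<And>t. frac t \<in> Ob \<Longrightarrow> frac (H t) \<in> out_nbhd E (frac t) \<and> frac (H t) \<in> Ob"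
    using Fp fH by simp
  have Hmax: "\<And>t w. frac t \<in> Ob \<Longrightarrow> w \<in> out_nbhd E (frac t) \<inter> Ob \<Longrightarrow> t + cdist (frac t) w \<le> H t"
  proof -
    fix t w assume t: "frac t \<in> Ob" and w: "w \<in> out_nbhd E (frac t) \<inter> Ob"
    have "cdist (frac t) w \<le> cdist (frac t) (F (frac t))" using Fp[OF t] w by blast
    then show "t + cdist (frac t) w \<le> H t" unfolding H_def by simp
  qed
  have props: "\<And>t. frac t \<in> Ob \<Longrightarrow> t \<le> H t \<and> H t < t + 1 \<and>
     frac (H t) \<in> out_nbhd E (frac t) \<and> frac (H t) \<in> Ob \<and>
     (\<forall>w \<in> out_nbhd E (frac t) \<inter> Ob. t + cdist (frac t) w \<le> H t)"
    using Hge Hlt Hout Hmax by blast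
  have shH: "\<And>t z. H (t + of_int z) = H t + of_int z" unfolding H_def by simp
  have "cmap H {t. frac t \<in> Ob}"
  proof
    fix t assume "t \<in> {t. frac t \<in> Ob}"
    then show "H t \<in> {t. frac t \<in> Ob}" using Hout by simp
  next
    fix t z assume "t \<in> {t. frac t \<in> Ob}"
    then show "t + of_int z \<in> {t. frac t \<in> Ob}" by simp
  next
    fix t z show "H (t + of_int z) = H t + of_int z" by (rule shH)
  next
    fix s t assume s: "s \<in> {t. frac t \<in> Ob}" and t: "t \<in> {t. frac t \<in> Ob}" and st: "s \<le> t"
    show "H s \<le> H t"
    proof (cases "H s \<le> t")
      case True then show ?thesis using Hge[of t] by simp
    next
      case False
      show ?thesis
      proof (cases "s = t")
        case True then show ?thesis by simp
      next
        case ne: False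
        have lt: "s < t" "t < H s" "H s < s + 1" using st ne False Hlt[of s] by auto
        have cs: "cyc_strict (frac s) (frac t) (frac (H s))" by (rule cs_lift[OF lt])
        have "frac (H s) \<in> out_nbhd E (frac s)" using Hout s by simp
        moreover have "frac (H s) \<noteq> frac s" using cs unfolding cyc_strict_def by auto
        ultimately have e: "(frac s, frac (H s)) \<in> E" by (auto simp: out_nbhd_iff)
        have tV: "frac t \<in> V" using t OV by auto
        have "(frac t, frac (H s)) \<in> E" using cyc_edge[OF G e tV cs] by simp
        then have "frac (H s) \<in> out_nbhd E (frac t) \<inter> Ob" using Hout s by (auto simp: out_nbhd_iff)
        then have "t + cdist (frac t) (frac (H s)) \<le> H t" using Hmax t by simp
        moreover have "cdist (frac t) (frac (H s)) = H s - t"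
          using cdist_lift[of t "H s"] lt by (simp add: frac_eq)
        ultimately show ?thesis by simp
      qed
    qed
  qed
  then show ?thesis using props by blast
qed

lemma H_walk:
  assumes P: "\<And>t. frac t \<in> Ob \<Longrightarrow> t \<le> H t \<and> H t < t + 1 \<and>
     frac (H t) \<in> out_nbhd E (frac t) \<and> frac (H t) \<in> Ob"
    and t: "frac t \<in> Ob"
  shows "\<exists>y. y 0 = frac t \<and> is_walk E n y \<and> walk_len n y = (H^^n) t - t"
proof -
  have cl: "frac ((H^^i) t) \<in> Ob" for i
  proof (induction i)
    case 0 then show ?case using t by simp
  next
    case (Suc i) then show ?case using P by simp
  qed
  define y where "y i = frac ((H^^i) t)" for i
  have w: "is_walk E n y" unfolding is_walk_def y_def using P cl by auto
  have l: "walk_len n y = (H^^n) t - t"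
  proof (induction n)
    case 0 then show ?case by simp
  next
    case (Suc n)
    define a where "a = (H^^n) t"
    have "cdist (y n) (y (Suc n)) = frac (H a - a)" unfolding y_def a_def using cdist_lift by simp
    also have "\<dots> = H a - a" using P[OF cl[of n]] unfolding a_def by (simp add: frac_eq)
    finally show ?case using Suc unfolding a_def by (simp add: walk_len_Suc)
  qed
  show ?thesis using w l by (intro exI[of _ y]) (auto simp: y_def)
qed



theorem mainTheorem9:
  fixes V :: "real set" and E :: "(real \<times> real) set" and p q :: int and v :: real
  assumes "cyclic_graph V E"
    and "winding_fraction V E = real_of_int p / real_of_int q"
    and "q > 0" and "coprime p q"
    and "v \<in> V" and "periodic E v"
  shows "orbit_length E v = nat q \<and> winding_number E v = real_of_int p
         \<and> gamma E (nat q) v = real_of_int p"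
proof -
  note G = assms(1)
  have cd: "circ_digraph V E" using G unfolding cyclic_graph_def by auto
  have V01: "V \<subseteq> {0..<1}" using cd unfolding circ_digraph_def by auto
  have v01: "v \<in> {0..<1}" using assms(5) V01 by auto
  define l where "l = orbit_length E v"
  have pl: "periodic_at E v l" unfolding l_def orbit_length_def
    using assms(6) unfolding periodic_def by (rule LeastI_ex)
  have least: "\<And>i. periodic_at E v i \<Longrightarrow> l \<le> i" unfolding l_def orbit_length_def by (rule Least_le)
  have l1: "l \<ge> 1" using pl unfolding periodic_at_def by simp
  obtain w :: int where gw: "gamma E l v = of_int w"
    using pl unfolding periodic_at_def by (auto elim: Ints_cases)
  obtain x where x: "x 0 = v" "is_walk E l x" "walk_len l x = of_int w"
    using pl gw unfolding periodic_at_def gamma_attained_def by auto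
  have M1: "\<And>y. y 0 = v \<Longrightarrow> is_walk E l y \<Longrightarrow> walk_len l y \<le> of_int w"
    using gamma_upper gw by metis
  have w0: "w \<ge> 0" using x(3) walk_len_nonneg[of l x] by simp
  have Mk: "\<And>m y. y 0 = v \<Longrightarrow> is_walk E (m*l) y \<Longrightarrow> walk_len (m*l) y \<le> of_int (int m * w)"
    using bound_mult[OF G assms(5) M1] by blast
  define Ob where "Ob = x ` {..l}"
  have ObV: "Ob \<subseteq> V" unfolding Ob_def using walk_in_V[OF cd x(2)] x(1) assms(5) by auto
  have fin: "finite Ob" unfolding Ob_def by simp
  have vO: "v \<in> Ob" unfolding Ob_def using x(1) by force
  obtain H where cm: "cmap H {t. frac t \<in> Ob}" and P: "\<forall>t. frac t \<in> Ob \<longrightarrow> t \<le> H t \<and> H t < t + 1 \<and>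
     frac (H t) \<in> out_nbhd E (frac t) \<and> frac (H t) \<in> Ob \<and>
     (\<forall>w \<in> out_nbhd E (frac t) \<inter> Ob. t + cdist (frac t) w \<le> H t)"
    using greedy_exists[OF G ObV fin] by blast
  have P': "\<And>t. frac t \<in> Ob \<Longrightarrow> t \<le> H t \<and> H t < t + 1 \<and>
     frac (H t) \<in> out_nbhd E (frac t) \<and> frac (H t) \<in> Ob" using P by blast
  have fv: "frac v = v" using v01 by simp
  have vL: "v \<in> {t. frac t \<in> Ob}" using vO fv by simp
  have x01: "\<And>i. i \<le> l \<Longrightarrow> x i \<in> {0..<1}" using walk_in01[OF cd x(2)] x(1) assms(5) by auto
  have dom: "i \<le> l \<Longrightarrow> v + walk_len i x \<le> (H^^i) v" for i
  proof (induction i)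
    case 0 then show ?case by simp
  next
    case (Suc i)
    define X where "X = v + walk_len i x"
    have fX: "frac X = x i" unfolding X_def by (rule lift_walk) (use x01 Suc.prems x(1) fv in auto)
    have XL: "X \<in> {t. frac t \<in> Ob}" using fX Suc.prems unfolding Ob_def by auto
    have st: "x (Suc i) \<in> out_nbhd E (x i) \<inter> Ob" using x(2) Suc.prems unfolding is_walk_def Ob_def by auto
    have "\<forall>w\<in>out_nbhd E (frac X) \<inter> Ob. X + cdist (frac X) w \<le> H X" using P XL by blast
    then have "X + cdist (x i) (x (Suc i)) \<le> H X" using st fX by simp
    also have "H X \<le> H ((H^^i) v)"
      using cmap.mono[OF cm XL cmap.closed_it[OF cm vL]] Suc X_def by simp
    finally show ?case unfolding X_def by (simp add: walk_len_Suc add.assoc)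
  qed
  have Hl: "(H^^l) v = v + of_int w"
  proof -
    have "\<exists>y. y 0 = frac v \<and> is_walk E l y \<and> walk_len l y = (H^^l) v - v"
      by (rule H_walk[where Ob=Ob and H=H and E=E]) (use P' vO fv in auto)
    then obtain y where y: "y 0 = frac v" "is_walk E l y" "walk_len l y = (H^^l) v - v"
      by blast
    have "(H^^l) v - v \<le> of_int w" using M1[of y] y fv by simp
    moreover have "v + of_int w \<le> (H^^l) v" using dom[of l] x(3) by simp
    ultimately show ?thesis by simp
  qed
  have cop: "coprime w (int l)"
  proof -
    define g where "g = gcd w (int l)"
    have g0: "g > 0" unfolding g_def using l1 by simp
    define l' where "l' = nat (int l div g)"
    define w' where "w' = w div g"
    have nn: "0 \<le> int l div g" using g0 by (simp add: pos_imp_zdiv_nonneg_iff)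
    have il: "int l = g * int l'" unfolding l'_def using nn unfolding g_def
      by (simp add: dvd_mult_div_cancel)
    have iw: "w = g * w'" unfolding w'_def g_def by simp
    have l'1: "l' \<ge> 1"
    proof (rule ccontr)
      assume "\<not> l' \<ge> 1"
      then have "l' = 0" by simp
      then show False using il l1 by simp
    qed
    have Hl': "(H^^l') v = v + of_int w'"
    proof -
      have a: "(H^^l') v \<ge> v + of_int w'"
        using cmap.order_ge[OF cm vL l1 Hl, where k=l' and c=w'] il iw by (simp add: algebra_simps)
      have b: "(H^^l') v \<le> v + of_int w'"
        using cmap.order_le[OF cm vL l1 Hl, where k=l' and c=w'] il iw by (simp add: algebra_simps)
      show ?thesis using a b by simp
    qed
    have "\<exists>y. y 0 = frac v \<and> is_walk E l' y \<and> walk_len l' y = (H^^l') v - v"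
      by (rule H_walk[where Ob=Ob and H=H and E=E]) (use P' vO fv in auto)
    then obtain y where y: "y 0 = frac v" "is_walk E l' y" "walk_len l' y = (H^^l') v - v"
      by blast
    have wly: "walk_len l' y = of_int w'" using y Hl' by simp
    have gle: "gamma E l' v \<le> of_int w'"
    proof (rule gamma_least, rule ccontr)
      fix z assume z: "z 0 = v" "is_walk E l' z" "\<not> walk_len l' z \<le> of_int w'"
      have "nat g \<ge> 1" using g0 by simp
      from amplify[OF G assms(5) z(1,2) _ this, of w'] z(3)
      obtain u where u: "u 0 = v" "is_walk E (nat g * l') u" "walk_len (nat g * l') u > of_int (int (nat g) * w')"
        by auto
      have e: "nat g * l' = l"
      proof -
        have "int (nat g * l') = int l" using il g0 by simp
        then show ?thesis by (simp only: of_nat_eq_iff)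
      qed
      have "walk_len l u > of_int w" using u(3) e iw g0 by simp
      then show False using M1[of u] u(1,2) e by simp
    qed
    have gge: "gamma E l' v \<ge> of_int w'" using gamma_upper[where x=y and v=v and m=l' and E=E] y fv wly by simp
    have geq: "gamma E l' v = of_int w'" using gle gge by simp
    have "periodic_at E v l'" unfolding periodic_at_def gamma_attained_def
    proof (intro conjI)
      show "1 \<le> l'" by (rule l'1)
      show "gamma E l' v \<in> \<int>" unfolding geq by simp
      show "\<exists>x. x 0 = v \<and> is_walk E l' x \<and> walk_len l' x = gamma E l' v"
        using y fv wly geq by (intro exI[of _ y]) simp
    qed
    then have "l \<le> l'" by (rule least)
    then have "g * int l' \<le> 1 * int l'" using il by simp
    moreover have "0 < int l'" using l'1 by simp
    ultimately have "g \<le> 1" by (rule mult_right_le_imp_le)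
    then have "g = 1" using g0 by simp
    then show ?thesis unfolding g_def by (simp add: coprime_iff_gcd_eq_1)
  qed
  have lower: "of_int w / real l \<le> winding_fraction V E"
  proof (cases "w = 0")
    case True
    have "cyc_hom 1 0 {v} (E \<inter> ({v} \<times> {v})) (\<lambda>_. v)"
      unfolding cyc_hom_def by (auto simp: cyc_weak_def cdist_def)
    from wfr_lower[OF _ _ _ this] assms(5) have "real 0 / real 1 \<le> winding_fraction V E" by simp
    then show ?thesis using True by simp
  next
    case False
    then have w1: "w \<ge> 1" using w0 by simp
    have ch: "chom H {t. frac t \<in> Ob} v l w V E Ob"
      unfolding chom_def chom_axioms_def cper_def cper_axioms_def
      using cm vL l1 Hl cop G ObV P w1 by auto
    obtain f where hm: "cyc_hom l (nat w) Ob (E \<inter> (Ob \<times> Ob)) f"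
      using chom.hom[OF ch] by blast
    have tw: "2 * nat w < l" using chom.two_W[OF ch] w1 by simp
    have "real (nat w) / real l \<le> winding_fraction V E"
      by (rule wfr_lower[OF fin ObV _ hm tw]) (use vO in auto)
    then show ?thesis using w0 by simp
  qed
  have upper: "winding_fraction V E \<le> of_int w / real l"
  proof (rule wfr_upper[OF assms(5)])
    fix Wf n k f
    assume Wf: "finite Wf" "Wf \<subseteq> V" "Wf \<noteq> {}" and h: "cyc_hom n k Wf (E \<inter> (Wf \<times> Wf)) f"
      and nk: "2 * k < n"
    show "real k / real n \<le> of_int w / real l"
    proof (cases "k = 0")
      case True then show ?thesis using w0 by simp
    next
      case False
      then have k1: "k \<ge> 1" by simp
      obtain z where z: "z 0 = f 0" "is_walk E (n*l) z" "walk_len (n*l) z = real (l*k)"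
        using hom_gain[OF G Wf(2) h nk k1, of l] by blast
      have f0: "f 0 \<in> V" using h Wf(2) nk unfolding cyc_hom_def by auto
      then have f001: "f 0 \<in> {0..<1}" using V01 by auto
      define S where "S = (if f 0 \<le> v then f 0 else f 0 - 1)"
      have fS: "frac S = z 0"
      proof (cases "f 0 \<le> v")
        case True then show ?thesis unfolding S_def using z(1) f001 by simp
      next
        case False
        have "frac (f 0 + of_int (-1)) = f 0" using f001 by (simp only: frac_add_of_int_right) simp
        then show ?thesis unfolding S_def using z(1) False by simp
      qed
      have Sv: "S \<le> v" "v - 1 < S" unfolding S_def using f001 v01 by auto
      obtain u where u: "u 0 = frac v" "is_walk E (n*l) u" "S + walk_len (n*l) z \<le> v + walk_len (n*l) u"
        using domination[OF G z(2) _ fS _ Sv(1)] z(1) f0 fv assms(5) by auto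
      have "walk_len (n*l) u \<le> of_int (int n * w)" using Mk[of u n] u fv by simp
      then have "real (l*k) < of_int (int n * w) + 1" using u(3) z(3) Sv(2) by simp
      then have "int (l*k) < int n * w + 1" by linarith
      then have le: "int l * int k \<le> int n * w" by simp
      have n0: "real n > 0" using nk by simp
      have l0: "real l > 0" using l1 by simp
      have "real_of_int (int l * int k) \<le> real_of_int (int n * w)" using le by (simp only: of_int_le_iff)
      then have "real l * real k \<le> real n * of_int w" by simp
      then show ?thesis using n0 l0 by (simp add: divide_le_eq le_divide_eq mult.commute)
    qed
  qed
  have eqf: "real_of_int p / real_of_int q = of_int w / real l"
    using lower upper assms(2) by simp
  have cross: "p * int l = w * q"
  proof -
    have "real_of_int p * real l = of_int w * real_of_int q"
      using eqf assms(3) l1 by (simp add: field_simps)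
    then have "real_of_int (p * int l) = real_of_int (w * q)" by simp
    then show ?thesis by (simp only: of_int_eq_iff)
  qed
  have ql: "q = int l"
  proof -
    have "q dvd p * int l" using cross by simp
    then have d1: "q dvd int l" using assms(4) by (simp add: coprime_commute coprime_dvd_mult_right_iff)
    have "int l dvd w * q" using cross[symmetric] by simp
    then have d2: "int l dvd q" using cop by (simp add: coprime_commute coprime_dvd_mult_right_iff)
    show ?thesis using d1 d2 assms(3) by (simp add: zdvd_antisym_nonneg)
  qed
  have pw: "p = w" using cross ql l1 by simp
  have nq: "nat q = l" using ql by simp
  show ?thesis unfolding nq winding_number_def l_def[symmetric] using gw pw by simp
qed


end
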